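(* Let $(p_n)_{n\in\mathbb N}\subset\mathbb R$ and suppose there are constants $C>0$, $\theta_0\ge0$ with $|p_n|\le C\lambda_n^{\theta_0}$ for all $n\in\mathbb N$. Let $(\ell_m)_{m\in\mathbb N}\subset\mathbb N$ satisfy $\lim_{m\to\infty}\ell_m=\infty$. If for every $m\in\mathbb N$ the series $\sum_{n=1}^\infty p_n\lambda_n^{-\ell_m}$ converges and equals $0$, then $p_n=0$ for all $n\in\mathbb N$.
   Context: $\Omega\subset\mathbb{R}^d$ is a bounded domain with smooth boundary; $A v=-\sum_{i,j=1}^d\partial_i(a_{ij}\partial_jv)-cv$ with $a_{ij}=a_{ji}$, $c$ sufficiently smooth on $\overline\Omega$, $c\le0$, uniformly elliptic, $\mathcal D(A)=H^2(\Omega)\cap H^1_0(\Omega)$. $0<\lambda_1<\lambda_2<\cdots\to\infty$ denote the distinct eigenvalues of $A$ (each of finite multiplicity). *)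

theory Defs
  imports "HOL-Analysis.Analysis"
begin

text \<open>Abstraction of the sequence of distinct eigenvalues
  0 < lambda_1 < lambda_2 < ... tending to infinity (indexed from 0 here).\<close>
definition eigenvalue_seq :: "(nat \<Rightarrow> real) \<Rightarrow> bool" where
  "eigenvalue_seq lam \<longleftrightarrow> (\<forall>n. 0 < lam n) \<and> strict_mono lam \<and> filterlim lam at_top sequentially"

end

theory Submission
  imports Defs
begin

lemma abel_bound:
  fixes a w T :: "nat \<Rightarrow> real"
  assumes T: "\<And>n. T n = a n + T (Suc n)"
    and TB: "\<And>n. \<bar>T n\<bar> \<le> B"
    and wd: "\<And>n. w (Suc n) \<le> w n" and wp: "\<And>n. 0 \<le> w n"
  shows "\<bar>\<Sum>i\<le>k. a (j+i) * w (j+i)\<bar> \<le> 2 * B * w j"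
proof -
  have S: "\<bar>(\<Sum>i\<le>k. a (j+i) * w (j+i)) + T (Suc (j+k)) * w (j+k)\<bar> \<le> B * (2 * w j - w (j+k))" for k
  proof (induction k)
    case 0
    have "\<bar>a j * w j + T (Suc j) * w j\<bar> = \<bar>T j\<bar> * w j"
    proof -
      have "a j * w j + T (Suc j) * w j = T j * w j" using T[of j] by (simp add: distrib_right)
      then show ?thesis using wp[of j] by (simp add: abs_mult)
    qed
    also have "\<dots> \<le> B * w j" using TB[of j] wp[of j] by (simp add: mult_right_mono)
    finally show ?case by simp
  next
    case (Suc k)
    have eq: "(\<Sum>i\<le>Suc k. a (j+i) * w (j+i)) + T (Suc (j+Suc k)) * w (j+Suc k)
       = ((\<Sum>i\<le>k. a (j+i) * w (j+i)) + T (Suc (j+k)) * w (j+k)) + T (Suc (j+k)) * (w (Suc (j+k)) - w (j+k))"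
      using T[of "Suc (j+k)"] by (simp add: algebra_simps)
    have "\<bar>T (Suc (j+k)) * (w (Suc (j+k)) - w (j+k))\<bar> \<le> B * (w (j+k) - w (Suc (j+k)))"
      using TB[of "Suc (j+k)"] wd[of "j+k"] by (simp add: abs_mult mult_right_mono)
    moreover have "B * (2 * w j - w (j+k)) + B * (w (j+k) - w (Suc (j+k))) = B * (2 * w j - w (j + Suc k))"
      by (simp add: algebra_simps)
    ultimately show ?case unfolding eq using Suc
      abs_triangle_ineq[of "(\<Sum>i\<le>k. a (j+i) * w (j+i)) + T (Suc (j+k)) * w (j+k)" "T (Suc (j+k)) * (w (Suc (j+k)) - w (j+k))"]
      by linarith
  qed
  have "\<bar>T (Suc (j+k)) * w (j+k)\<bar> \<le> B * w (j+k)"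
    using TB[of "Suc (j+k)"] wp[of "j+k"] by (simp add: abs_mult mult_right_mono)
  moreover have "B * (2 * w j - w (j+k)) + B * w (j+k) = 2 * B * w j" by (simp add: algebra_simps)
  ultimately show ?thesis using S[of k] by linarith
qed

theorem lemma5:
  fixes lam :: "nat \<Rightarrow> real" and p :: "nat \<Rightarrow> real" and l :: "nat \<Rightarrow> nat"
    and C \<theta>0 :: real
  assumes "eigenvalue_seq lam"
    and "C > 0" and "\<theta>0 \<ge> 0"
    and "\<And>n. \<bar>p n\<bar> \<le> C * lam n powr \<theta>0"
    and "filterlim l at_top sequentially"
    and "\<And>m. (\<lambda>n. p n * lam n powr (- real (l m))) sums 0"
  shows "\<forall>n. p n = 0"
proof -
  have lp: "\<And>n. 0 < lam n" and sm: "strict_mono lam" using assms(1) unfolding eigenvalue_seq_def by auto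
  have hyp: "(\<lambda>n. p n / lam n ^ l m) sums 0" for m
  proof -
    have "p n * lam n powr (- real (l m)) = p n / lam n ^ l m" for n
      using lp[of n] by (simp add: powr_minus powr_realpow divide_inverse)
    then show ?thesis using assms(6)[of m] by simp
  qed
  define L0 where "L0 = l 0"
  define a where "a n = p n / lam n ^ L0" for n
  have sa: "summable a" using hyp[of 0] unfolding a_def L0_def by (simp add: sums_summable)
  define T where "T n = (\<Sum>k. a (k + n))" for n
  have Trec: "T n = a n + T (Suc n)" for n
  proof -
    have s: "summable (\<lambda>k. a (k + n))" using sa by (rule summable_ignore_initial_segment)
    have "(\<Sum>k. a (Suc k + n)) = (\<Sum>k. a (k + n)) - a (0 + n)"
      using suminf_split_head[OF s] by simp
    then show ?thesis unfolding T_def by simp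
  qed
  have "T \<longlonglongrightarrow> suminf a - suminf a"
  proof -
    have eq: "T = (\<lambda>n. suminf a - (\<Sum>i<n. a i))"
      unfolding T_def using suminf_minus_initial_segment[OF sa] by (simp add: fun_eq_iff)
    show ?thesis unfolding eq by (intro tendsto_diff tendsto_const summable_LIMSEQ sa)
  qed
  then have "Bseq T" by (rule convergent_imp_Bseq[OF convergentI])
  then obtain B where Bp: "B > 0" and TB: "\<And>n. \<bar>T n\<bar> \<le> B" by (auto elim: BseqE)
  show ?thesis
  proof
    fix N0
    show "p N0 = 0"
    proof (induction N0 rule: less_induct)
      case (less N)
      show ?case
      proof (rule ccontr)
        assume pN: "p N \<noteq> 0"
        define r where "r = lam N / lam (Suc N)"
        have r0: "0 < r" and r1: "r < 1"
          using lp[of N] lp[of "Suc N"] strict_monoD[OF sm, of N "Suc N"] unfolding r_def by auto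
        define c where "c = 2 * B * lam N ^ L0"
        have c0: "c > 0" unfolding c_def using Bp lp[of N] by simp
        have "(\<lambda>k. r ^ k) \<longlonglongrightarrow> 0" using r0 r1 by (intro LIMSEQ_power_zero) auto
        then have "eventually (\<lambda>k. r ^ k < \<bar>p N\<bar> / c) sequentially"
          using pN c0 by (intro order_tendstoD) auto
        then obtain k0 where k0: "r ^ k0 < \<bar>p N\<bar> / c"
          by (auto simp: eventually_sequentially)
        have "eventually (\<lambda>M. L0 + k0 \<le> l M) sequentially"
          using assms(5) by (simp add: filterlim_at_top)
        then obtain M where M: "L0 + k0 \<le> l M" by (auto simp: eventually_sequentially)
        define k where "k = l M - L0"
        have kk0: "k0 \<le> k" and Lk: "l M = L0 + k" using M unfolding k_def by auto
        define w where "w n = 1 / lam n ^ k" for n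
        define b where "b n = p n / lam n ^ l M" for n
        have bw: "b n = a n * w n" for n
          unfolding b_def a_def w_def Lk by (simp add: power_add)
        have wd: "w (Suc n) \<le> w n" for n
        proof -
          have "lam n ^ k \<le> lam (Suc n) ^ k"
            using lp[of n] strict_monoD[OF sm, of n "Suc n"] by (intro power_mono) auto
          then show ?thesis unfolding w_def using lp[of n] lp[of "Suc n"]
            by (intro divide_left_mono) (auto intro: mult_pos_pos)
        qed
        have wp: "0 \<le> w n" for n unfolding w_def using lp[of n] by simp
        have ab: "\<bar>\<Sum>i\<le>q. b (Suc N + i)\<bar> \<le> 2 * B * w (Suc N)" for q
          unfolding bw using abel_bound[of T a B w "Suc N" q, OF Trec TB wd wp] .
        have b0: "(\<Sum>i<N. b i) = 0" using less unfolding b_def by simp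
        have cs: "(\<lambda>i. b (i + N)) sums 0"
        proof -
          have "b sums 0" using hyp[of M] unfolding b_def[abs_def] .
          then show ?thesis using b0 sums_iff_shift[of b N 0] by simp
        qed
        have lim: "(\<lambda>K. \<bar>\<Sum>i<K. b (i + N)\<bar>) \<longlonglongrightarrow> \<bar>0\<bar>"
          using cs unfolding sums_def by (rule tendsto_rabs)
        have "\<bar>b N\<bar> - 2 * B * w (Suc N) \<le> 0"
        proof (rule LIMSEQ_le_const[OF lim[simplified]])
          show "\<exists>N'. \<forall>K\<ge>N'. \<bar>b N\<bar> - 2 * B * w (Suc N) \<le> \<bar>\<Sum>i<K. b (i + N)\<bar>"
          proof (intro exI allI impI)
            fix K :: nat assume "2 \<le> K"
            then obtain q where K: "K = Suc (Suc q)" by (metis add_2_eq_Suc le_Suc_ex)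
            have "(\<Sum>i<K. b (i + N)) = b N + (\<Sum>i<Suc q. b (Suc i + N))"
              unfolding K by (subst sum.lessThan_Suc_shift) simp
            also have "(\<Sum>i<Suc q. b (Suc i + N)) = (\<Sum>i\<le>q. b (Suc N + i))"
              by (simp add: lessThan_Suc_atMost add.commute)
            finally show "\<bar>b N\<bar> - 2 * B * w (Suc N) \<le> \<bar>\<Sum>i<K. b (i + N)\<bar>"
              using ab[of q] by linarith
          qed
        qed
        then have ineq: "\<bar>p N\<bar> / lam N ^ l M \<le> 2 * B / lam (Suc N) ^ k"
          unfolding b_def w_def using lp[of N] by (simp add: abs_divide)
        have "\<bar>p N\<bar> \<le> 2 * B / lam (Suc N) ^ k * lam N ^ l M"
          using ineq lp[of N] by (simp add: divide_le_eq)
        also have "\<dots> = c * r ^ k"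
          unfolding c_def r_def Lk by (simp add: power_add power_divide)
        also have "\<dots> \<le> c * r ^ k0"
          using c0 r0 r1 kk0 by (intro mult_left_mono power_decreasing) auto
        also have "\<dots> < \<bar>p N\<bar>" using k0 c0 by (simp add: field_simps)
        finally show False by simp
      qed
    qed
  qed
qed

end
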